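(* Suppose all agents are single-minded, agent $i$ having value $v_i>0$ for any set containing $S_i\subseteq M$ (and $0$ otherwise). Consider the following algorithm (SingleMinded MC-CWE). Phase 1: let $Q=\{i:|S_i|\le\sqrt{m}\}$; process agents of $Q$ in decreasing order of $v_i$, assigning $x_i=S_i$ to agent $i$ if $S_i$ is disjoint from all sets assigned so far (all other agents get $x_i=\emptyset$); then add each item not yet allocated to an arbitrary nonempty bundle $x_j$. Phase 2: for each $i\notin Q$ in decreasing order of $v_i$, let $C_i=\{j: x_j\cap S_i\neq\emptyset\}$; if $v_i>\sum_{j\in C_i}v_j$ then set $x_i\leftarrow\bigcup_{j\in C_i}x_j$ and $x_j\leftarrow\emptyset$ for each $j\in C_i$. Return $x$. Then the returned allocation is an MC-CWE allocation whose social welfare is within a factor $O(\sqrt{m})$ of the optimal social welfare over all allocations, and the algorithm can be implemented with a polynomial number of value queries.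
   Context: $M$ is a finite set of $m$ indivisible items and $[n]$ a set of agents. An allocation is a tuple $(x_0,\dots,x_n)$ of pairwise disjoint sets with union $M$ ($x_0$ unallocated); social welfare is $\sum_i v_i(x_i)$ where for single-minded agent $i$, $v_i(T)=v_i$ if $S_i\subseteq T$ and $0$ otherwise. An allocation is MC-CWE if there are prices $p_k\ge0$ for each nonempty bundle $x_k$ such that (i) for every agent $i$ and every set $T$ of indices of nonempty bundles, $u_i\ge v_i(\bigcup_{k\in T}x_k)-\sum_{k\in T}p_k$, where $u_i=v_i(x_i)-p_i$ if $x_i\neq\emptyset$ and $0$ otherwise; and (ii) $p_0=0$ if $x_0\ne\emptyset$. A value query asks agent $i$ for $v_i(S)$ for a given $S$. *)

theory Defs
  imports Complex_Main
begin

text \<open>Agents are 1..n; index 0 denotes the unallocated bundle. Allocations are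
  functions x :: nat => 'a set, only indices 0..n are meaningful.\<close>

definition sm_val :: "(nat \<Rightarrow> 'a set) \<Rightarrow> (nat \<Rightarrow> real) \<Rightarrow> nat \<Rightarrow> 'a set \<Rightarrow> real" where
  "sm_val S v i T = (if S i \<subseteq> T then v i else 0)"

definition is_allocation :: "'a set \<Rightarrow> nat \<Rightarrow> (nat \<Rightarrow> 'a set) \<Rightarrow> bool" where
  "is_allocation M n x \<longleftrightarrow>
     (\<forall>j\<in>{0..n}. \<forall>k\<in>{0..n}. j \<noteq> k \<longrightarrow> x j \<inter> x k = {}) \<and> (\<Union>j\<in>{0..n}. x j) = M"

definition social_welfare :: "nat \<Rightarrow> (nat \<Rightarrow> 'a set) \<Rightarrow> (nat \<Rightarrow> real) \<Rightarrow> (nat \<Rightarrow> 'a set) \<Rightarrow> real" where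
  "social_welfare n S v x = (\<Sum>i\<in>{1..n}. sm_val S v i (x i))"

definition is_MC_CWE :: "nat \<Rightarrow> (nat \<Rightarrow> 'a set) \<Rightarrow> (nat \<Rightarrow> real) \<Rightarrow> (nat \<Rightarrow> 'a set) \<Rightarrow> bool" where
  "is_MC_CWE n S v x \<longleftrightarrow>
     (\<exists>p :: nat \<Rightarrow> real.
        (\<forall>k\<in>{0..n}. x k \<noteq> {} \<longrightarrow> p k \<ge> 0) \<and>
        (\<forall>i\<in>{1..n}. \<forall>T. T \<subseteq> {k\<in>{0..n}. x k \<noteq> {}} \<longrightarrow>
            (if x i \<noteq> {} then sm_val S v i (x i) - p i else 0)
              \<ge> sm_val S v i (\<Union>k\<in>T. x k) - (\<Sum>k\<in>T. p k)) \<and>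
        (x 0 \<noteq> {} \<longrightarrow> p 0 = 0))"

fun phase1 :: "(nat \<Rightarrow> 'a set) \<Rightarrow> (nat \<Rightarrow> 'a set) \<Rightarrow> nat list \<Rightarrow> (nat \<Rightarrow> 'a set)" where
  "phase1 S x [] = x"
| "phase1 S x (i # is) =
     phase1 S (if S i \<inter> (\<Union>j. x j) = {} then x(i := S i) else x) is"

definition fill_leftover :: "'a set \<Rightarrow> nat \<Rightarrow> (nat \<Rightarrow> 'a set) \<Rightarrow> (nat \<Rightarrow> 'a set) \<Rightarrow> bool" where
  "fill_leftover M n x x' \<longleftrightarrow>
     (let L = M - (\<Union>j\<in>{1..n}. x j) in
      if (\<exists>j\<in>{1..n}. x j \<noteq> {}) then
        (\<exists>f :: 'a \<Rightarrow> nat. (\<forall>a\<in>L. f a \<in> {1..n} \<and> x (f a) \<noteq> {}) \<and> x' 0 = {} \<and>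
           (\<forall>j\<in>{1..n}. x' j = x j \<union> {a\<in>L. f a = j}))
      else (x' 0 = L \<and> (\<forall>j\<in>{1..n}. x' j = x j)))"

fun phase2 :: "nat \<Rightarrow> (nat \<Rightarrow> 'a set) \<Rightarrow> (nat \<Rightarrow> real) \<Rightarrow> (nat \<Rightarrow> 'a set) \<Rightarrow> nat list
                 \<Rightarrow> (nat \<Rightarrow> 'a set)" where
  "phase2 n S v x [] = x"
| "phase2 n S v x (i # is) =
     (let C = {j\<in>{0..n}. x j \<inter> S i \<noteq> {}} in
      if v i > (\<Sum>j\<in>C. if j = 0 then 0 else v j)
      then phase2 n S v (\<lambda>k. if k = i then (\<Union>j\<in>C. x j) else if k \<in> C then {} else x k) is
      else phase2 n S v x is)"

definition small_agents :: "'a set \<Rightarrow> nat \<Rightarrow> (nat \<Rightarrow> 'a set) \<Rightarrow> nat set" where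
  "small_agents M n S = {i\<in>{1..n}. real (card (S i)) \<le> sqrt (real (card M))}"

text \<open>x is a possible output of SingleMinded MC-CWE (over all tie-breakings and
  all arbitrary choices in the algorithm).\<close>
definition sm_alg_output :: "'a set \<Rightarrow> nat \<Rightarrow> (nat \<Rightarrow> 'a set) \<Rightarrow> (nat \<Rightarrow> real)
                               \<Rightarrow> (nat \<Rightarrow> 'a set) \<Rightarrow> bool" where
  "sm_alg_output M n S v x \<longleftrightarrow>
     (\<exists>l1 l2 x2.
        distinct l1 \<and> set l1 = small_agents M n S \<and> sorted_wrt (\<lambda>i j. v j \<le> v i) l1 \<and>
        fill_leftover M n (phase1 S (\<lambda>_. {}) l1) x2 \<and>
        distinct l2 \<and> set l2 = {1..n} - small_agents M n S \<and> sorted_wrt (\<lambda>i j. v j \<le> v i) l2 \<and>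
        x = phase2 n S v x2 l2)"

text \<open>Adaptive value-query algorithms as query trees: a node asks agent i for v_i(T)
  and continues depending on the answer.\<close>
datatype ('a, 'b) qtree = Leaf 'b | Query nat "'a set" "real \<Rightarrow> ('a, 'b) qtree"

primrec run_qtree :: "('a, 'b) qtree \<Rightarrow> (nat \<Rightarrow> 'a set \<Rightarrow> real) \<Rightarrow> 'b \<times> nat" where
  "run_qtree (Leaf r) orc = (r, 0)"
| "run_qtree (Query i T k) orc = (let (r, c) = run_qtree (k (orc i T)) orc in (r, Suc c))"

end

theory Submission
  imports Defs
begin


lemma phase1_outside: "j \<notin> set l \<Longrightarrow> phase1 S x l j = x j"
  by (induction l arbitrary: x) auto

lemma phase1_main:
  fixes v :: "nat \<Rightarrow> real"
  assumes "distinct l" "sorted_wrt (\<lambda>i j. v j \<le> v i) l" "\<forall>i\<in>set l. S i \<noteq> {}"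
    "\<forall>j. x j \<noteq> {} \<longrightarrow> x j = S j \<and> j \<notin> set l \<and> (\<forall>i\<in>set l. v i \<le> v j)"
    "\<forall>j k. j \<noteq> k \<longrightarrow> x j \<inter> x k = {}"
  shows "(\<forall>j. phase1 S x l j \<noteq> {} \<longrightarrow> phase1 S x l j = S j \<and> (x j \<noteq> {} \<or> j \<in> set l)) \<and>
         (\<forall>j k. j \<noteq> k \<longrightarrow> phase1 S x l j \<inter> phase1 S x l k = {}) \<and>
         (\<forall>j. x j \<noteq> {} \<longrightarrow> phase1 S x l j = x j) \<and>
         (\<forall>i\<in>set l. \<exists>w. phase1 S x l w \<noteq> {} \<and> S w \<inter> S i \<noteq> {} \<and> v i \<le> v w)"
  using assms
proof (induction l arbitrary: x)
  case Nil
  then show ?case by auto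
next
  case (Cons i js)
  have xi: "x i = {}" using Cons.prems(4) by auto
  show ?case
  proof (cases "S i \<inter> (\<Union>j. x j) = {}")
    case True
    define x' where "x' = x(i := S i)"
    have ph: "phase1 S x (i # js) = phase1 S x' js" using True by (simp add: x'_def)
    have inv': "\<forall>j. x' j \<noteq> {} \<longrightarrow> x' j = S j \<and> j \<notin> set js \<and> (\<forall>i\<in>set js. v i \<le> v j)"
      using Cons.prems(1,2,4) by (auto simp: x'_def)
    have disj': "\<forall>j k. j \<noteq> k \<longrightarrow> x' j \<inter> x' k = {}"
    proof (intro allI impI)
      fix j k :: nat assume jk: "j \<noteq> k"
      show "x' j \<inter> x' k = {}"
      proof (cases "j = i \<or> k = i")
        case True
        have "S i \<inter> x m = {}" for m using \<open>S i \<inter> (\<Union>j. x j) = {}\<close> by blast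
        then show ?thesis using True jk by (auto simp: x'_def)
      next
        case False
        then show ?thesis using Cons.prems(5) jk by (simp add: x'_def)
      qed
    qed
    have IH: "(\<forall>j. phase1 S x' js j \<noteq> {} \<longrightarrow> phase1 S x' js j = S j \<and> (x' j \<noteq> {} \<or> j \<in> set js)) \<and>
         (\<forall>j k. j \<noteq> k \<longrightarrow> phase1 S x' js j \<inter> phase1 S x' js k = {}) \<and>
         (\<forall>j. x' j \<noteq> {} \<longrightarrow> phase1 S x' js j = x' j) \<and>
         (\<forall>i\<in>set js. \<exists>w. phase1 S x' js w \<noteq> {} \<and> S w \<inter> S i \<noteq> {} \<and> v i \<le> v w)"
      using Cons.IH[OF _ _ _ inv' disj'] Cons.prems(1,2,3) by auto
    have Si: "S i \<noteq> {}" using Cons.prems(3) by auto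
    have x'i: "x' i = S i" "x' i \<noteq> {}" using Si by (auto simp: x'_def)
    have yi: "phase1 S x' js i = S i"
      using IH x'i by metis
    define y where "y = phase1 S x' js"
    have c1: "\<forall>j. y j \<noteq> {} \<longrightarrow> y j = S j \<and> (x j \<noteq> {} \<or> j \<in> set (i # js))"
    proof (intro allI impI)
      fix j assume "y j \<noteq> {}"
      then have "y j = S j \<and> (x' j \<noteq> {} \<or> j \<in> set js)" using IH unfolding y_def by blast
      moreover have "x' j \<noteq> {} \<Longrightarrow> x j \<noteq> {} \<or> j = i" by (auto simp: x'_def split: if_splits)
      ultimately show "y j = S j \<and> (x j \<noteq> {} \<or> j \<in> set (i # js))" by auto
    qed
    have c3: "\<forall>j. x j \<noteq> {} \<longrightarrow> y j = x j"
    proof (intro allI impI)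
      fix j assume "x j \<noteq> {}"
      then have "j \<noteq> i" "x' j = x j" using xi by (auto simp: x'_def)
      then show "y j = x j" using IH \<open>x j \<noteq> {}\<close> unfolding y_def by metis
    qed
    have c4: "\<forall>i'\<in>set (i # js). \<exists>w. y w \<noteq> {} \<and> S w \<inter> S i' \<noteq> {} \<and> v i' \<le> v w"
    proof
      fix i' assume "i' \<in> set (i # js)"
      then consider "i' = i" | "i' \<in> set js" by auto
      then show "\<exists>w. y w \<noteq> {} \<and> S w \<inter> S i' \<noteq> {} \<and> v i' \<le> v w"
      proof cases
        case 1 then show ?thesis using yi Si unfolding y_def by (intro exI[of _ i]) auto
      next
        case 2 then show ?thesis using IH unfolding y_def by blast
      qed
    qed
    show ?thesis unfolding ph using c1 c3 c4 IH unfolding y_def by blast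
  next
    case False
    then obtain j a where a: "a \<in> S i" "a \<in> x j" by auto
    have xj: "x j = S j" "v i \<le> v j" using Cons.prems(4) a by auto
    have ph: "phase1 S x (i # js) = phase1 S x js" using False by simp
    have inv': "\<forall>j. x j \<noteq> {} \<longrightarrow> x j = S j \<and> j \<notin> set js \<and> (\<forall>i\<in>set js. v i \<le> v j)"
      using Cons.prems(4) by auto
    have IH: "(\<forall>j. phase1 S x js j \<noteq> {} \<longrightarrow> phase1 S x js j = S j \<and> (x j \<noteq> {} \<or> j \<in> set js)) \<and>
         (\<forall>j k. j \<noteq> k \<longrightarrow> phase1 S x js j \<inter> phase1 S x js k = {}) \<and>
         (\<forall>j. x j \<noteq> {} \<longrightarrow> phase1 S x js j = x j) \<and>
         (\<forall>i\<in>set js. \<exists>w. phase1 S x js w \<noteq> {} \<and> S w \<inter> S i \<noteq> {} \<and> v i \<le> v w)"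
      using Cons.IH[OF _ _ _ inv' Cons.prems(5)] Cons.prems(1,2,3) by auto
    have yj: "phase1 S x js j = x j" using IH a by auto
    have blk: "\<exists>w. phase1 S x js w \<noteq> {} \<and> S w \<inter> S i \<noteq> {} \<and> v i \<le> v w"
      using yj a xj by (intro exI[of _ j]) auto
    show ?thesis unfolding ph using IH blk by auto
  qed
qed

definition pw :: "(nat \<Rightarrow> real) \<Rightarrow> nat \<Rightarrow> real" where
  "pw v k = (if k = 0 then 0 else v k)"

definition cov :: "nat \<Rightarrow> (nat \<Rightarrow> real) \<Rightarrow> (nat \<Rightarrow> 'a set) \<Rightarrow> 'a set \<Rightarrow> real" where
  "cov n v x A = (\<Sum>k\<in>{k\<in>{0..n}. x k \<inter> A \<noteq> {}}. pw v k)"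

lemma pw_nonneg: "\<forall>k\<in>{1..n}. 0 < v k \<Longrightarrow> k \<in> {0..n} \<Longrightarrow> 0 \<le> pw v k"
  by (auto simp: pw_def less_imp_le)

lemma cov_merge_mono:
  assumes "i \<in> {1..n}" "C \<subseteq> {0..n}" "i \<notin> C" "x i = {}" "\<forall>k\<in>{1..n}. 0 < v k"
    "(\<Sum>j\<in>C. pw v j) < v i"
  shows "cov n v x A \<le> cov n v (\<lambda>k. if k = i then (\<Union>j\<in>C. x j) else if k \<in> C then {} else x k) A"
proof -
  define x' where "x' = (\<lambda>k. if k = i then (\<Union>j\<in>C. x j) else if k \<in> C then {} else x k)"
  define K where "K = {k\<in>{0..n}. x k \<inter> A \<noteq> {}}"
  define K' where "K' = {k\<in>{0..n}. x' k \<inter> A \<noteq> {}}"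
  have fK: "finite K" "finite C" using assms(2) finite_subset by (auto simp: K_def)
  have nn: "\<And>k. k \<in> {0..n} \<Longrightarrow> 0 \<le> pw v k" using pw_nonneg assms(5) by blast
  show ?thesis
  proof (cases "K \<inter> C = {}")
    case True
    have e: "x j \<inter> A = {}" if "j \<in> C" for j
      using True that assms(2) unfolding K_def by blast
    have "K' = K"
    proof -
      have "x' k \<inter> A = x k \<inter> A" if "k \<in> {0..n}" for k
        using e assms(4) by (auto simp: x'_def)
      then show ?thesis unfolding K_def K'_def by auto
    qed
    then show ?thesis unfolding cov_def x'_def[symmetric] K_def[symmetric] K'_def[symmetric] by simp
  next
    case False
    have K'eq: "K' = insert i (K - C)" using False assms(1,3,4) unfolding K_def K'_def x'_def by auto
    have iK: "i \<notin> K - C" using assms(4) by (auto simp: K_def)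
    have "cov n v x' A = pw v i + (\<Sum>k\<in>K - C. pw v k)"
      unfolding cov_def K'_def[symmetric] K'eq using fK iK by simp
    also have "pw v i = v i" using assms(1) by (simp add: pw_def)
    finally have c': "cov n v x' A = v i + (\<Sum>k\<in>K - C. pw v k)" .
    have "cov n v x A = (\<Sum>k\<in>K \<inter> C. pw v k) + (\<Sum>k\<in>K - C. pw v k)"
      unfolding cov_def K_def[symmetric] using fK by (simp add: sum.Int_Diff)
    moreover have "(\<Sum>k\<in>K \<inter> C. pw v k) \<le> (\<Sum>k\<in>C. pw v k)"
      using fK nn assms(2) by (intro sum_mono2) auto
    ultimately show ?thesis using c' assms(6) unfolding x'_def by linarith
  qed
qed


lemma merge_alloc:
  assumes al: "is_allocation M n x" and "i \<in> {0..n}" "C \<subseteq> {0..n}" "i \<notin> C" "x i = {}"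
  shows "is_allocation M n (\<lambda>k. if k = i then (\<Union>j\<in>C. x j) else if k \<in> C then {} else x k)"
proof -
  define x' where "x' = (\<lambda>k. if k = i then (\<Union>j\<in>C. x j) else if k \<in> C then {} else x k)"
  have dj: "\<And>j k. j \<in> {0..n} \<Longrightarrow> k \<in> {0..n} \<Longrightarrow> j \<noteq> k \<Longrightarrow> x j \<inter> x k = {}"
    using al unfolding is_allocation_def by blast
  have un: "(\<Union>j\<in>{0..n}. x j) = M" using al unfolding is_allocation_def by blast
  have d1: "x' i \<inter> x' k = {}" if "k \<in> {0..n}" "k \<noteq> i" for k
  proof (cases "k \<in> C")
    case True then show ?thesis using that by (simp add: x'_def)
  next
    case False
    have "x c \<inter> x k = {}" if "c \<in> C" for c using dj[of c k] that False assms(3) \<open>k \<in> {0..n}\<close> by blast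
    then show ?thesis using that False by (auto simp: x'_def)
  qed
  have disj: "\<forall>j\<in>{0..n}. \<forall>k\<in>{0..n}. j \<noteq> k \<longrightarrow> x' j \<inter> x' k = {}"
  proof (intro ballI impI)
    fix j k assume jk: "j \<in> {0..n}" "k \<in> {0..n}" "j \<noteq> k"
    show "x' j \<inter> x' k = {}"
    proof (cases "j = i")
      case True then show ?thesis using d1 jk by simp
    next
      case F1: False
      show ?thesis
      proof (cases "k = i")
        case True then show ?thesis using d1[of j] jk F1 by blast
      next
        case False
        then show ?thesis using F1 dj[OF jk] by (simp add: x'_def)
      qed
    qed
  qed
  have sub: "x' j \<subseteq> M" if "j \<in> {0..n}" for j
    using that assms(3) un by (auto simp: x'_def)
  have sup: "M \<subseteq> (\<Union>j\<in>{0..n}. x' j)"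
  proof
    fix a assume "a \<in> M"
    then obtain j where j: "j \<in> {0..n}" "a \<in> x j" using un by blast
    show "a \<in> (\<Union>j\<in>{0..n}. x' j)"
    proof (cases "j \<in> C")
      case True then have "a \<in> x' i" using j by (auto simp: x'_def)
      then show ?thesis using assms(2) by blast
    next
      case False
      then have "j \<noteq> i" using j assms(5) by auto
      then have "a \<in> x' j" using j False by (simp add: x'_def)
      then show ?thesis using j by blast
    qed
  qed
  show ?thesis unfolding is_allocation_def x'_def[symmetric] using disj sub sup by blast
qed

lemma cov_ge_member:
  assumes "\<forall>k\<in>{1..n}. 0 < v k" "k \<in> {1..n}" "x k \<inter> A \<noteq> {}"
  shows "v k \<le> cov n v x A"
proof -
  have "v k = pw v k" using assms(2) by (simp add: pw_def)
  also have "\<dots> \<le> cov n v x A" unfolding cov_def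
    using assms pw_nonneg[OF assms(1)] by (intro member_le_sum) auto
  finally show ?thesis .
qed

lemma phase2_main:
  fixes v :: "nat \<Rightarrow> real"
  assumes G: "\<forall>i\<in>{1..n}. S i \<noteq> {} \<and> S i \<subseteq> M \<and> v i > 0"
    and "is_allocation M n x" "\<forall>j\<in>{1..n}. x j \<noteq> {} \<longrightarrow> S j \<subseteq> x j"
    "\<forall>i\<in>set l. x i = {}" "set l \<subseteq> {1..n}" "distinct l"
  shows "is_allocation M n (phase2 n S v x l) \<and>
         (\<forall>j\<in>{1..n}. phase2 n S v x l j \<noteq> {} \<longrightarrow> S j \<subseteq> phase2 n S v x l j) \<and>
         (\<forall>A. cov n v x A \<le> cov n v (phase2 n S v x l) A) \<and>
         (\<forall>i\<in>set l. v i \<le> cov n v (phase2 n S v x l) (S i))"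
  using assms(2-)
proof (induction l arbitrary: x)
  case Nil
  then show ?case by simp
next
  case (Cons i js)
  have vpos: "\<forall>k\<in>{1..n}. 0 < v k" using G by blast
  have i1: "i \<in> {1..n}" using Cons.prems by auto
  have xi: "x i = {}" using Cons.prems by auto
  define C where "C = {j\<in>{0..n}. x j \<inter> S i \<noteq> {}}"
  have sumC: "(\<Sum>j\<in>C. if j = 0 then 0 else v j) = cov n v x (S i)"
    by (simp add: C_def cov_def pw_def)
  have sumC': "(\<Sum>j\<in>C. pw v j) = cov n v x (S i)"
    by (simp add: C_def cov_def)
  have Csub: "C \<subseteq> {0..n}" "i \<notin> C" using xi by (auto simp: C_def)
  show ?case
  proof (cases "v i > cov n v x (S i)")
    case True
    define x' where "x' = (\<lambda>k. if k = i then (\<Union>j\<in>C. x j) else if k \<in> C then {} else x k)"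
    have ph: "phase2 n S v x (i # js) = phase2 n S v x' js"
      unfolding phase2.simps Let_def C_def[symmetric] using True sumC by (simp add: x'_def)
    have al': "is_allocation M n x'" unfolding x'_def
      using merge_alloc[OF Cons.prems(1) _ Csub xi] i1 by auto
    have un: "(\<Union>j\<in>{0..n}. x j) = M" using Cons.prems(1) unfolding is_allocation_def by blast
    have Six: "S i \<subseteq> x' i"
    proof
      fix a assume a: "a \<in> S i"
      then have "a \<in> M" using G i1 by blast
      then obtain j where "j \<in> {0..n}" "a \<in> x j" using un by blast
      then have "j \<in> C" using a by (auto simp: C_def)
      then show "a \<in> x' i" using \<open>a \<in> x j\<close> by (auto simp: x'_def)
    qed
    have h2: "\<forall>j\<in>{1..n}. x' j \<noteq> {} \<longrightarrow> S j \<subseteq> x' j"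
      using Cons.prems(2) Six by (auto simp: x'_def)
    have emp: "\<forall>i'\<in>set js. x' i' = {}"
      using Cons.prems(3,5) by (auto simp: x'_def)
    have IH: "is_allocation M n (phase2 n S v x' js) \<and>
         (\<forall>j\<in>{1..n}. phase2 n S v x' js j \<noteq> {} \<longrightarrow> S j \<subseteq> phase2 n S v x' js j) \<and>
         (\<forall>A. cov n v x' A \<le> cov n v (phase2 n S v x' js) A) \<and>
         (\<forall>i\<in>set js. v i \<le> cov n v (phase2 n S v x' js) (S i))"
      using Cons.IH[OF al' h2 emp] Cons.prems(4,5) by auto
    have mono: "cov n v x A \<le> cov n v x' A" for A
      unfolding x'_def using cov_merge_mono[of i n C x v A, OF i1 Csub xi vpos] True sumC' by simp
    have "S i \<noteq> {}" using G i1 by blast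
    then have "x' i \<inter> S i \<noteq> {}" using Six by blast
    then have "v i \<le> cov n v x' (S i)"
      using cov_ge_member[OF vpos i1, of x' "S i"] by blast
    then have vi: "v i \<le> cov n v (phase2 n S v x' js) (S i)" using IH by (meson order_trans)
    have mono2: "\<forall>A. cov n v x A \<le> cov n v (phase2 n S v x' js) A"
      using IH mono by (meson order_trans)
    show ?thesis unfolding ph using IH mono2 vi by auto
  next
    case False
    have ph: "phase2 n S v x (i # js) = phase2 n S v x js"
      unfolding phase2.simps Let_def C_def[symmetric] using False sumC by simp
    have IH: "is_allocation M n (phase2 n S v x js) \<and>
         (\<forall>j\<in>{1..n}. phase2 n S v x js j \<noteq> {} \<longrightarrow> S j \<subseteq> phase2 n S v x js j) \<and>
         (\<forall>A. cov n v x A \<le> cov n v (phase2 n S v x js) A) \<and>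
         (\<forall>i\<in>set js. v i \<le> cov n v (phase2 n S v x js) (S i))"
      using Cons.IH[OF Cons.prems(1,2)] Cons.prems(3,4,5) by auto
    have "v i \<le> cov n v (phase2 n S v x js) (S i)" using IH False by (meson not_less order_trans)
    then show ?thesis unfolding ph using IH by auto
  qed
qed



lemma card_meet_le:
  assumes "finite B" "\<forall>i\<in>I. \<forall>j\<in>I. i \<noteq> j \<longrightarrow> S i \<inter> S j = {}"
  shows "card {i\<in>I. B \<inter> S i \<noteq> {}} \<le> card B"
proof -
  define g where "g i = (SOME a. a \<in> B \<inter> S i)" for i
  have g: "g i \<in> B \<inter> S i" if "i \<in> {i\<in>I. B \<inter> S i \<noteq> {}}" for i
  proof -
    have "\<exists>a. a \<in> B \<inter> S i" using that by blast
    then show ?thesis unfolding g_def by (rule someI_ex)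
  qed
  have "inj_on g {i\<in>I. B \<inter> S i \<noteq> {}}"
  proof (rule inj_onI)
    fix i j assume ij: "i \<in> {i\<in>I. B \<inter> S i \<noteq> {}}" "j \<in> {i\<in>I. B \<inter> S i \<noteq> {}}" "g i = g j"
    show "i = j"
    proof (rule ccontr)
      assume "i \<noteq> j"
      then have "S i \<inter> S j = {}" using assms(2) ij by auto
      then show False using g[OF ij(1)] g[OF ij(2)] ij(3) by auto
    qed
  qed
  moreover have "g ` {i\<in>I. B \<inter> S i \<noteq> {}} \<subseteq> B" using g by blast
  ultimately show ?thesis using assms(1) by (rule card_inj_on_le)
qed

lemma welfare_bound:
  fixes v :: "nat \<Rightarrow> real"
  assumes G: "\<forall>i\<in>{1..n}. S i \<noteq> {} \<and> S i \<subseteq> M \<and> v i > 0"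
    and fM: "finite M" and al: "is_allocation M n y"
    and W1: "W1 \<subseteq> {1..n}" "\<forall>w\<in>W1. real (card (S w)) \<le> sqrt (real (card M))"
    and blk: "\<forall>i\<in>small_agents M n S. \<exists>w\<in>W1. S w \<inter> S i \<noteq> {} \<and> v i \<le> v w"
    and Zl: "\<forall>i\<in>{1..n}. v i \<le> Z" and ZW: "sum v W1 \<le> Z"
  shows "social_welfare n S v y \<le> 2 * sqrt (real (card M)) * Z"
proof -
  define m where "m = sqrt (real (card M))"
  have m0: "0 \<le> m" by (simp add: m_def)
  define I where "I = {i\<in>{1..n}. S i \<subseteq> y i}"
  define Q where "Q = small_agents M n S"
  define Is where "Is = I \<inter> Q"
  define Il where "Il = I - Q"
  have fI: "finite I" "finite Is" "finite Il" "finite W1" using W1(1) finite_subset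
    by (auto simp: I_def Is_def Il_def)
  have dj: "\<forall>i\<in>I. \<forall>j\<in>I. i \<noteq> j \<longrightarrow> S i \<inter> S j = {}"
    using al unfolding is_allocation_def I_def by fastforce
  have "sum v I = (\<Sum>i\<in>{1..n}. if S i \<subseteq> y i then v i else 0)"
    unfolding I_def by (rule sum.inter_filter) simp
  then have sw: "social_welfare n S v y = sum v I"
    unfolding social_welfare_def sm_val_def by simp
  have split: "sum v I = sum v Is + sum v Il"
    unfolding Is_def Il_def using fI by (simp add: sum.Int_Diff)
  have vW: "\<forall>w\<in>W1. 0 \<le> v w" using W1(1) G by force
  have "0 \<le> sum v W1" using vW by (intro sum_nonneg) auto
  then have Z0: "0 \<le> Z" using ZW by linarith
  define f where "f w i = (if S w \<inter> S i \<noteq> {} then v w else 0)" for w i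
  have fnn: "0 \<le> f w i" if "w \<in> W1" for w i using vW that by (simp add: f_def)
  have s1: "v i \<le> (\<Sum>w\<in>W1. f w i)" if "i \<in> Is" for i
  proof -
    have "i \<in> Q" using that by (simp add: Is_def)
    then obtain w where w: "w \<in> W1" "S w \<inter> S i \<noteq> {}" "v i \<le> v w" using blk Q_def by blast
    have "v w = f w i" using w by (simp add: f_def)
    also have "\<dots> \<le> (\<Sum>w\<in>W1. f w i)" using fI fnn w(1) by (intro member_le_sum) auto
    finally show ?thesis using w by linarith
  qed
  have cnt: "(\<Sum>i\<in>Is. f w i) \<le> v w * m" if "w \<in> W1" for w
  proof -
    have "(\<Sum>i\<in>Is. f w i) = (\<Sum>i\<in>{i\<in>Is. S w \<inter> S i \<noteq> {}}. v w)"
      unfolding f_def by (rule sum.inter_filter[symmetric, OF fI(2)])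
    also have "\<dots> = real (card {i\<in>Is. S w \<inter> S i \<noteq> {}}) * v w" by simp
    also have "\<dots> \<le> real (card (S w)) * v w"
    proof -
      have "finite (S w)" using G W1(1) that fM finite_subset by blast
      moreover have "\<forall>i\<in>Is. \<forall>j\<in>Is. i \<noteq> j \<longrightarrow> S i \<inter> S j = {}" using dj by (auto simp: Is_def)
      ultimately have "card {i\<in>Is. S w \<inter> S i \<noteq> {}} \<le> card (S w)" by (rule card_meet_le)
      then show ?thesis using vW that by (intro mult_right_mono) auto
    qed
    also have "\<dots> \<le> m * v w" using W1(2) that vW m_def by (intro mult_right_mono) auto
    finally show ?thesis by (simp add: mult.commute)
  qed
  have "sum v Is \<le> (\<Sum>i\<in>Is. \<Sum>w\<in>W1. f w i)" using s1 by (rule sum_mono)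
  also have "\<dots> = (\<Sum>w\<in>W1. \<Sum>i\<in>Is. f w i)" by (rule sum.swap)
  also have "\<dots> \<le> (\<Sum>w\<in>W1. v w * m)" using cnt by (rule sum_mono)
  also have "\<dots> = sum v W1 * m" by (simp add: sum_distrib_right)
  also have "\<dots> \<le> Z * m" using ZW m0 by (rule mult_right_mono)
  finally have smallb: "sum v Is \<le> m * Z" by (simp add: mult.commute)
  have large: "m < real (card (S i))" if "i \<in> Il" for i
    using that unfolding Il_def I_def Q_def small_agents_def m_def by auto
  have cardIl: "real (card Il) \<le> m"
  proof (cases "Il = {}")
    case True then show ?thesis using m0 by simp
  next
    case False
    have IlI: "Il \<subseteq> I" by (auto simp: Il_def)
    have SM: "S i \<subseteq> M" if "i \<in> Il" for i
    proof -
      have "i \<in> {1..n}" using that IlI unfolding I_def by auto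
      then show ?thesis using G by blast
    qed
    have fS: "\<forall>i\<in>Il. finite (S i)" using SM fM by (meson finite_subset)
    have djl: "\<forall>i\<in>Il. \<forall>j\<in>Il. i \<noteq> j \<longrightarrow> S i \<inter> S j = {}" using dj IlI by blast
    have "card (\<Union>i\<in>Il. S i) = (\<Sum>i\<in>Il. card (S i))"
      using card_UN_disjoint[OF fI(3)] fS djl by simp
    moreover have "card (\<Union>i\<in>Il. S i) \<le> card M"
      using SM fM by (intro card_mono) auto
    ultimately have "(\<Sum>i\<in>Il. card (S i)) \<le> card M" by linarith
    then have "real (\<Sum>i\<in>Il. card (S i)) \<le> real (card M)" by (rule of_nat_mono)
    then have "(\<Sum>i\<in>Il. real (card (S i))) \<le> real (card M)" by (simp only: of_nat_sum)
    moreover have "(\<Sum>i\<in>Il. m) \<le> (\<Sum>i\<in>Il. real (card (S i)))"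
      using large by (intro sum_mono) (simp add: less_imp_le)
    moreover have "m * m = real (card M)" unfolding m_def by simp
    moreover have "(\<Sum>i\<in>Il. m) = real (card Il) * m" by simp
    ultimately have le: "real (card Il) * m \<le> m * m" by linarith
    obtain i where "i \<in> Il" using False by blast
    have "m > 0"
    proof (rule ccontr)
      assume "\<not> m > 0"
      then have "m = 0" using m0 by simp
      then have "card M = 0" using m_def by simp
      moreover have "card (S i) \<le> card M" using SM[OF \<open>i \<in> Il\<close>] fM by (intro card_mono) auto
      ultimately show False using large[OF \<open>i \<in> Il\<close>] \<open>m = 0\<close> by simp
    qed
    then show ?thesis using le mult_le_cancel_right_pos[of m "real (card Il)" m] by simp
  qed
  have "sum v Il \<le> (\<Sum>i\<in>Il. Z)" using Zl by (intro sum_mono) (auto simp: Il_def I_def)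
  also have "\<dots> = real (card Il) * Z" by simp
  also have "\<dots> \<le> m * Z" using cardIl Z0 by (rule mult_right_mono)
  finally have largeb: "sum v Il \<le> m * Z" .
  have "social_welfare n S v y \<le> 2 * m * Z" using sw split smallb largeb by linarith
  then show ?thesis unfolding m_def .
qed



lemma cov_mono_set:
  assumes "\<forall>k\<in>{1..n}. 0 < v k" "A \<subseteq> B"
  shows "cov n v x A \<le> cov n v x B"
  unfolding cov_def
proof (rule sum_mono2)
  show "finite {k \<in> {0..n}. x k \<inter> B \<noteq> {}}" by simp
  show "{k \<in> {0..n}. x k \<inter> A \<noteq> {}} \<subseteq> {k \<in> {0..n}. x k \<inter> B \<noteq> {}}" using assms(2) by blast
  show "\<And>b. b \<in> {k \<in> {0..n}. x k \<inter> B \<noteq> {}} - {k \<in> {0..n}. x k \<inter> A \<noteq> {}} \<Longrightarrow> 0 \<le> pw v b"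
    using pw_nonneg[OF assms(1)] by blast
qed

lemma sw_eq_cov:
  fixes v :: "nat \<Rightarrow> real"
  assumes G: "\<forall>i\<in>{1..n}. S i \<noteq> {} \<and> S i \<subseteq> M \<and> v i > 0"
    and al: "is_allocation M n x" and h2: "\<forall>j\<in>{1..n}. x j \<noteq> {} \<longrightarrow> S j \<subseteq> x j"
  shows "social_welfare n S v x = cov n v x M"
proof -
  have un: "(\<Union>j\<in>{0..n}. x j) = M" using al unfolding is_allocation_def by blast
  have xM: "x k \<inter> M = x k" if "k \<in> {0..n}" for k using un that by blast
  have "cov n v x M = (\<Sum>k\<in>{0..n}. if x k \<inter> M \<noteq> {} then pw v k else 0)"
    unfolding cov_def by (rule sum.inter_filter) simp
  also have "\<dots> = (\<Sum>k\<in>{0..n}. if x k \<noteq> {} then pw v k else 0)"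
    by (rule sum.cong) (simp_all add: xM)
  also have "\<dots> = (\<Sum>k\<in>{Suc 0..n}. if x k \<noteq> {} then pw v k else 0)"
    by (subst sum.atLeast_Suc_atMost) (simp_all add: pw_def)
  also have "\<dots> = (\<Sum>k\<in>{1..n}. sm_val S v k (x k))"
  proof (rule sum.cong)
    fix k assume k: "k \<in> {1..n}"
    have "S k \<noteq> {}" using G k by blast
    then show "(if x k \<noteq> {} then pw v k else 0) = sm_val S v k (x k)"
      using h2 k by (auto simp: sm_val_def pw_def)
  qed simp
  finally show ?thesis unfolding social_welfare_def by simp
qed

lemma cwe:
  fixes v :: "nat \<Rightarrow> real"
  assumes G: "\<forall>i\<in>{1..n}. S i \<noteq> {} \<and> S i \<subseteq> M \<and> v i > 0"
    and al: "is_allocation M n x" and h2: "\<forall>j\<in>{1..n}. x j \<noteq> {} \<longrightarrow> S j \<subseteq> x j"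
    and D: "\<forall>i\<in>{1..n}. v i \<le> cov n v x (S i)"
  shows "is_MC_CWE n S v x"
  unfolding is_MC_CWE_def
proof (intro exI[of _ "pw v"] conjI)
  have vpos: "\<forall>k\<in>{1..n}. 0 < v k" using G by blast
  show "\<forall>k\<in>{0..n}. x k \<noteq> {} \<longrightarrow> 0 \<le> pw v k" using pw_nonneg[OF vpos] by blast
  show "x 0 \<noteq> {} \<longrightarrow> pw v 0 = 0" by (simp add: pw_def)
  have dj: "\<And>j k. j \<in> {0..n} \<Longrightarrow> k \<in> {0..n} \<Longrightarrow> j \<noteq> k \<Longrightarrow> x j \<inter> x k = {}"
    using al unfolding is_allocation_def by blast
  show "\<forall>i\<in>{1..n}. \<forall>T. T \<subseteq> {k \<in> {0..n}. x k \<noteq> {}} \<longrightarrow>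
      sm_val S v i (\<Union>k\<in>T. x k) - sum (pw v) T \<le> (if x i \<noteq> {} then sm_val S v i (x i) - pw v i else 0)"
  proof (intro ballI allI impI)
    fix i T assume i: "i \<in> {1..n}" and T: "T \<subseteq> {k \<in> {0..n}. x k \<noteq> {}}"
    have lhs: "(if x i \<noteq> {} then sm_val S v i (x i) - pw v i else 0) = 0"
      using h2 i by (auto simp: sm_val_def pw_def)
    have fT: "finite T" using T finite_subset by (metis (no_types, lifting) finite_atLeastAtMost mem_Collect_eq subsetI subset_iff)
    have Tnn: "0 \<le> pw v k" if "k \<in> T" for k using that T pw_nonneg[OF vpos] by blast
    have "sm_val S v i (\<Union>k\<in>T. x k) \<le> sum (pw v) T"
    proof (cases "S i \<subseteq> (\<Union>k\<in>T. x k)")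
      case True
      have KT: "{k\<in>{0..n}. x k \<inter> S i \<noteq> {}} \<subseteq> T"
      proof
        fix k assume "k \<in> {k\<in>{0..n}. x k \<inter> S i \<noteq> {}}"
        then obtain a where k: "k \<in> {0..n}" "a \<in> x k" "a \<in> S i" by blast
        then obtain k' where k': "k' \<in> T" "a \<in> x k'" using True by blast
        have "k' \<in> {0..n}" using k' T by blast
        then have "k = k'" using dj[of k k'] k k' by blast
        then show "k \<in> T" using k' by simp
      qed
      have "v i \<le> cov n v x (S i)" using D i by blast
      also have "\<dots> \<le> sum (pw v) T" unfolding cov_def
        using fT KT Tnn by (intro sum_mono2) auto
      finally show ?thesis using True by (simp add: sm_val_def)
    next
      case False
      then show ?thesis using Tnn by (simp add: sm_val_def sum_nonneg)
    qed
    then show "sm_val S v i (\<Union>k\<in>T. x k) - sum (pw v) T \<le> (if x i \<noteq> {} then sm_val S v i (x i) - pw v i else 0)"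
      unfolding lhs by simp
  qed
qed



lemma fill_props:
  assumes fl: "fill_leftover M n x x'" and xM: "\<forall>j\<in>{1..n}. x j \<subseteq> M"
    and dj: "\<forall>j\<in>{1..n}. \<forall>k\<in>{1..n}. j \<noteq> k \<longrightarrow> x j \<inter> x k = {}"
  shows "is_allocation M n x' \<and> (\<forall>j\<in>{1..n}. x j \<subseteq> x' j) \<and> (\<forall>j\<in>{1..n}. x j = {} \<longrightarrow> x' j = {})"
proof -
  define L where "L = M - (\<Union>j\<in>{1..n}. x j)"
  show ?thesis
  proof (cases "\<exists>j\<in>{1..n}. x j \<noteq> {}")
    case True
    then obtain f where f: "\<forall>a\<in>L. f a \<in> {1..n} \<and> x (f a) \<noteq> {}" "x' 0 = {}"
      "\<forall>j\<in>{1..n}. x' j = x j \<union> {a\<in>L. f a = j}"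
      using fl unfolding fill_leftover_def L_def[symmetric] Let_def by auto
    have disj: "\<forall>j\<in>{0..n}. \<forall>k\<in>{0..n}. j \<noteq> k \<longrightarrow> x' j \<inter> x' k = {}"
    proof (intro ballI impI)
      fix j k assume jk: "j \<in> {0..n}" "k \<in> {0..n}" "j \<noteq> k"
      show "x' j \<inter> x' k = {}"
      proof (cases "j = 0 \<or> k = 0")
        case True then show ?thesis using f(2) by auto
      next
        case False
        then have j1: "j \<in> {1..n}" "k \<in> {1..n}" using jk by auto
        have "x j \<inter> x k = {}" using dj j1 jk(3) by blast
        moreover have "x j \<inter> L = {}" "x k \<inter> L = {}" using j1 unfolding L_def by blast+
        ultimately show ?thesis using f(3) j1 jk(3) by auto
      qed
    qed
    have un: "(\<Union>j\<in>{0..n}. x' j) = M"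
    proof
      show "(\<Union>j\<in>{0..n}. x' j) \<subseteq> M"
      proof
        fix a assume "a \<in> (\<Union>j\<in>{0..n}. x' j)"
        then obtain j where j: "j \<in> {0..n}" "a \<in> x' j" by blast
        then have "j \<noteq> 0" using f(2) by (metis empty_iff)
        then have "j \<in> {1..n}" using j by auto
        then show "a \<in> M" using j f(3) xM unfolding L_def by auto
      qed
      show "M \<subseteq> (\<Union>j\<in>{0..n}. x' j)"
      proof
        fix a assume a: "a \<in> M"
        show "a \<in> (\<Union>j\<in>{0..n}. x' j)"
        proof (cases "a \<in> L")
          case True
          then have "f a \<in> {1..n}" using f(1) by blast
          then have "a \<in> x' (f a)" using f(3) True by auto
          then show ?thesis using \<open>f a \<in> {1..n}\<close> by auto
        next
          case False
          then obtain j where j: "j \<in> {1..n}" "a \<in> x j" using a unfolding L_def by blast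
          then have "a \<in> x' j" using f(3) by auto
          moreover have "j \<in> {0..n}" using j by auto
          ultimately show ?thesis by blast
        qed
      qed
    qed
    have "\<forall>j\<in>{1..n}. x j = {} \<longrightarrow> x' j = {}" using f(1,3) by auto
    then show ?thesis using disj un f(3) unfolding is_allocation_def by auto
  next
    case False
    then have f: "x' 0 = L" "\<forall>j\<in>{1..n}. x' j = x j"
      using fl unfolding fill_leftover_def L_def[symmetric] Let_def by auto
    have e: "\<forall>j\<in>{1..n}. x' j = {}" using f(2) False by auto
    have L: "L = M" using False unfolding L_def by auto
    have disj: "\<forall>j\<in>{0..n}. \<forall>k\<in>{0..n}. j \<noteq> k \<longrightarrow> x' j \<inter> x' k = {}"
    proof (intro ballI impI)
      fix j k assume jk: "j \<in> {0..n}" "k \<in> {0..n}" "j \<noteq> k"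
      then have "j \<in> {1..n} \<or> k \<in> {1..n}" by auto
      then show "x' j \<inter> x' k = {}" using e by auto
    qed
    have un: "(\<Union>j\<in>{0..n}. x' j) = M"
    proof -
      have "(\<Union>j\<in>{0..n}. x' j) = x' 0 \<union> (\<Union>j\<in>{1..n}. x' j)"
      proof -
        have "{0..n} = insert 0 {1..n}" by auto
        then show ?thesis by simp
      qed
      then show ?thesis using e f(1) L by auto
    qed
    show ?thesis using disj un f(2) unfolding is_allocation_def by auto
  qed
qed



lemma part1:
  fixes v :: "nat \<Rightarrow> real"
  assumes fM: "finite M" and G: "\<forall>i\<in>{1..n}. S i \<noteq> {} \<and> S i \<subseteq> M \<and> v i > 0"
    and out: "sm_alg_output M n S v x"
  shows "is_allocation M n x \<and> is_MC_CWE n S v x \<and>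
    (\<forall>y. is_allocation M n y \<longrightarrow> social_welfare n S v y \<le> 2 * sqrt (real (card M)) * social_welfare n S v x)"
proof -
  define Q where "Q = small_agents M n S"
  obtain l1 l2 x2 where l1: "distinct l1" "set l1 = Q" "sorted_wrt (\<lambda>i j. v j \<le> v i) l1"
    and fl: "fill_leftover M n (phase1 S (\<lambda>_. {}) l1) x2"
    and l2: "distinct l2" "set l2 = {1..n} - Q"
    and xdef: "x = phase2 n S v x2 l2"
    using out unfolding sm_alg_output_def Q_def by blast
  define x1 where "x1 = phase1 S (\<lambda>_. {}) l1"
  have vpos: "\<forall>k\<in>{1..n}. 0 < v k" using G by blast
  have Q1: "Q \<subseteq> {1..n}" unfolding Q_def small_agents_def by auto
  have Sne: "\<forall>i\<in>set l1. S i \<noteq> {}" using l1(2) Q1 G by blast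
  have P1: "(\<forall>j. x1 j \<noteq> {} \<longrightarrow> x1 j = S j \<and> j \<in> set l1) \<and>
         (\<forall>j k. j \<noteq> k \<longrightarrow> x1 j \<inter> x1 k = {}) \<and>
         (\<forall>i\<in>set l1. \<exists>w. x1 w \<noteq> {} \<and> S w \<inter> S i \<noteq> {} \<and> v i \<le> v w)"
    using phase1_main[OF l1(1) l1(3) Sne, of "\<lambda>_. {}"] unfolding x1_def by simp
  have x1j: "\<forall>j. x1 j \<noteq> {} \<longrightarrow> x1 j = S j \<and> j \<in> Q" using P1 l1(2) by auto
  have x1d: "\<forall>j k. j \<noteq> k \<longrightarrow> x1 j \<inter> x1 k = {}" using P1 by blast
  have blk: "\<forall>i\<in>Q. \<exists>w. x1 w \<noteq> {} \<and> S w \<inter> S i \<noteq> {} \<and> v i \<le> v w" using P1 l1(2) by blast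
  have x1M: "\<forall>j\<in>{1..n}. x1 j \<subseteq> M" using x1j G by (metis empty_subsetI)
  have F: "is_allocation M n x2 \<and> (\<forall>j\<in>{1..n}. x1 j \<subseteq> x2 j) \<and> (\<forall>j\<in>{1..n}. x1 j = {} \<longrightarrow> x2 j = {})"
    using fill_props[OF fl[folded x1_def] x1M] x1d by blast
  have al2: "is_allocation M n x2" using F by blast
  have sub12: "\<forall>j\<in>{1..n}. x1 j \<subseteq> x2 j" using F by blast
  have h22: "\<forall>j\<in>{1..n}. x2 j \<noteq> {} \<longrightarrow> S j \<subseteq> x2 j"
  proof (intro ballI impI)
    fix j assume j: "j \<in> {1..n}" "x2 j \<noteq> {}"
    then have "x1 j \<noteq> {}" using F by blast
    then have "x1 j = S j" using x1j by blast
    then show "S j \<subseteq> x2 j" using sub12 j by blast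
  qed
  have emp2: "\<forall>i\<in>set l2. x2 i = {}"
  proof
    fix i assume i: "i \<in> set l2"
    then have "i \<in> {1..n}" "i \<notin> Q" using l2(2) by auto
    then have "x1 i = {}" using x1j by blast
    then show "x2 i = {}" using F \<open>i \<in> {1..n}\<close> by blast
  qed
  have sl2: "set l2 \<subseteq> {1..n}" using l2(2) by blast
  have P2: "is_allocation M n x \<and> (\<forall>j\<in>{1..n}. x j \<noteq> {} \<longrightarrow> S j \<subseteq> x j) \<and>
         (\<forall>A. cov n v x2 A \<le> cov n v x A) \<and> (\<forall>i\<in>set l2. v i \<le> cov n v x (S i))"
    unfolding xdef by (rule phase2_main[OF G al2 h22 emp2 sl2 l2(1)])
  have alx: "is_allocation M n x" and h2x: "\<forall>j\<in>{1..n}. x j \<noteq> {} \<longrightarrow> S j \<subseteq> x j"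
    and mono: "\<And>A. cov n v x2 A \<le> cov n v x A"
    using P2[THEN conjunct1] P2[THEN conjunct2, THEN conjunct1] P2[THEN conjunct2, THEN conjunct2, THEN conjunct1] by blast+
  have D: "\<forall>i\<in>{1..n}. v i \<le> cov n v x (S i)"
  proof
    fix i assume i: "i \<in> {1..n}"
    show "v i \<le> cov n v x (S i)"
    proof (cases "i \<in> Q")
      case True
      then obtain w where w: "x1 w \<noteq> {}" "S w \<inter> S i \<noteq> {}" "v i \<le> v w" using blk by blast
      have wQ: "w \<in> {1..n}" "x1 w = S w" using x1j w(1) Q1 by blast+
      have "x2 w \<inter> S i \<noteq> {}" using sub12 wQ w(2) by blast
      then have "v w \<le> cov n v x2 (S i)" by (rule cov_ge_member[OF vpos wQ(1)])
      then show ?thesis using w(3) mono[of "S i"] by linarith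
    next
      case False
      then have "i \<in> set l2" using l2(2) i by blast
      then show ?thesis using P2[THEN conjunct2, THEN conjunct2, THEN conjunct2] by blast
    qed
  qed
  have cwe: "is_MC_CWE n S v x" by (rule cwe[OF G alx h2x D])
  define Z where "Z = social_welfare n S v x"
  have Zc: "Z = cov n v x M" unfolding Z_def by (rule sw_eq_cov[OF G alx h2x])
  define W1 where "W1 = {w\<in>{1..n}. x1 w \<noteq> {}}"
  have W1s: "W1 \<subseteq> {1..n}" by (auto simp: W1_def)
  have W1c: "\<forall>w\<in>W1. real (card (S w)) \<le> sqrt (real (card M))"
    using x1j unfolding W1_def Q_def small_agents_def by auto
  have blk2: "\<forall>i\<in>small_agents M n S. \<exists>w\<in>W1. S w \<inter> S i \<noteq> {} \<and> v i \<le> v w"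
  proof
    fix i assume "i \<in> small_agents M n S"
    then obtain w where w: "x1 w \<noteq> {}" "S w \<inter> S i \<noteq> {}" "v i \<le> v w" using blk Q_def by blast
    have "w \<in> W1" using x1j w(1) Q1 unfolding W1_def by blast
    then show "\<exists>w\<in>W1. S w \<inter> S i \<noteq> {} \<and> v i \<le> v w" using w by blast
  qed
  have Zl: "\<forall>i\<in>{1..n}. v i \<le> Z"
  proof
    fix i assume i: "i \<in> {1..n}"
    have "v i \<le> cov n v x (S i)" using D i by blast
    also have "\<dots> \<le> cov n v x M" using G i by (intro cov_mono_set[OF vpos]) blast
    finally show "v i \<le> Z" using Zc by simp
  qed
  have ZW: "sum v W1 \<le> Z"
  proof -
    have "sum v W1 = sum (pw v) W1" using W1s by (intro sum.cong) (auto simp: pw_def)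
    also have "\<dots> \<le> cov n v x2 M" unfolding cov_def
    proof (rule sum_mono2)
      show "finite {k \<in> {0..n}. x2 k \<inter> M \<noteq> {}}" by simp
      show "W1 \<subseteq> {k \<in> {0..n}. x2 k \<inter> M \<noteq> {}}"
      proof
        fix w assume w: "w \<in> W1"
        then have "w \<in> {1..n}" "x1 w = S w" "x1 w \<noteq> {}" using x1j unfolding W1_def by blast+
        moreover have "S w \<subseteq> M" using G \<open>w \<in> {1..n}\<close> by blast
        ultimately have "x2 w \<inter> M \<noteq> {}" using sub12 by blast
        then show "w \<in> {k \<in> {0..n}. x2 k \<inter> M \<noteq> {}}" using \<open>w \<in> {1..n}\<close> by auto
      qed
      show "\<And>b. b \<in> {k \<in> {0..n}. x2 k \<inter> M \<noteq> {}} - W1 \<Longrightarrow> 0 \<le> pw v b"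
        using pw_nonneg[OF vpos] by blast
    qed
    also have "\<dots> \<le> cov n v x M" by (rule mono)
    finally show ?thesis using Zc by simp
  qed
  have wb: "\<forall>y. is_allocation M n y \<longrightarrow> social_welfare n S v y \<le> 2 * sqrt (real (card M)) * Z"
    using welfare_bound[OF G fM _ W1s W1c blk2 Zl ZW] by blast
  show ?thesis using alx cwe wb unfolding Z_def by blast
qed



fun qs :: "(nat \<times> 'a set) list \<Rightarrow> (nat \<times> 'a set \<Rightarrow> real) \<Rightarrow> ((nat \<times> 'a set \<Rightarrow> real) \<Rightarrow> 'b) \<Rightarrow> ('a, 'b) qtree" where
  "qs [] acc F = Leaf (F acc)"
| "qs (p # ps) acc F = Query (fst p) (snd p) (\<lambda>r. qs ps (acc(p := r)) F)"

lemma run_qs: "run_qtree (qs L acc F) orc = (F (foldl (\<lambda>a p. a(p := orc (fst p) (snd p))) acc L), length L)"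
  by (induction L arbitrary: acc) auto

lemma foldl_upd_out: "p \<notin> set L \<Longrightarrow> foldl (\<lambda>a p. a(p := orc (fst p) (snd p))) acc L p = acc p"
  by (induction L arbitrary: acc) auto

lemma foldl_upd_in: "p \<in> set L \<Longrightarrow> foldl (\<lambda>a p. a(p := orc (fst p) (snd p))) acc L p = orc (fst p) (snd p)"
proof (induction L arbitrary: acc)
  case Nil then show ?case by simp
next
  case (Cons q L)
  show ?case
  proof (cases "p \<in> set L")
    case True then show ?thesis using Cons.IH by simp
  next
    case False
    then have pq: "p = q" using Cons.prems by simp
    have "foldl (\<lambda>a p. a(p := orc (fst p) (snd p))) acc (q # L) p
        = foldl (\<lambda>a p. a(p := orc (fst p) (snd p))) (acc(q := orc (fst q) (snd q))) L p" by simp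
    also have "\<dots> = (acc(q := orc (fst q) (snd q))) p" by (rule foldl_upd_out[OF False])
    finally show ?thesis using pq by (simp only: fun_upd_same)
  qed
qed

lemma phase1_cong: "set l \<subseteq> I \<Longrightarrow> \<forall>i\<in>I. S i = S' i \<Longrightarrow> phase1 S x l = phase1 S' x l"
  by (induction l arbitrary: x) auto

lemma phase2_cong:
  assumes "\<forall>i\<in>{1..n}. S i = S' i \<and> v i = v' i"
  shows "set l \<subseteq> {1..n} \<Longrightarrow> phase2 n S v x l = phase2 n S' v' x l"
proof (induction l arbitrary: x)
  case Nil then show ?case by simp
next
  case (Cons i js)
  have i: "i \<in> {1..n}" using Cons.prems by simp
  have Si: "S' i = S i" "v' i = v i" using assms i by auto
  have sumeq: "(\<Sum>j\<in>{j\<in>{0..n}. x j \<inter> S i \<noteq> {}}. if j = 0 then 0 else v' j) =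
               (\<Sum>j\<in>{j\<in>{0..n}. x j \<inter> S i \<noteq> {}}. if j = 0 then 0 else v j)"
    using assms by (intro sum.cong) auto
  have IH: "\<And>y. phase2 n S v y js = phase2 n S' v' y js" using Cons.IH Cons.prems by simp
  show ?case by (simp only: phase2.simps Let_def Si sumeq IH)
qed

lemma sorted_wrt_cong_v:
  fixes v v' :: "nat \<Rightarrow> real"
  shows "set l \<subseteq> I \<Longrightarrow> \<forall>i\<in>I. v i = v' i \<Longrightarrow>
    sorted_wrt (\<lambda>i j. v j \<le> v i) l = sorted_wrt (\<lambda>i j. v' j \<le> v' i) l"
proof -
  assume a: "set l \<subseteq> I" "\<forall>i\<in>I. v i = v' i"
  have e0: "\<And>x. x \<in> set l \<Longrightarrow> v x = v' x" using a by blast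
  have e: "\<And>x y. x \<in> set l \<Longrightarrow> y \<in> set l \<Longrightarrow> (v y \<le> v x) = (v' y \<le> v' x)"
    using e0 by simp
  show ?thesis
  proof
    assume "sorted_wrt (\<lambda>i j. v j \<le> v i) l"
    then show "sorted_wrt (\<lambda>i j. v' j \<le> v' i) l" by (rule sorted_wrt_mono_rel[rotated]) (use e in blast)
  next
    assume "sorted_wrt (\<lambda>i j. v' j \<le> v' i) l"
    then show "sorted_wrt (\<lambda>i j. v j \<le> v i) l" by (rule sorted_wrt_mono_rel[rotated]) (use e in blast)
  qed
qed

lemma small_cong: "\<forall>i\<in>{1..n}. S i = S' i \<Longrightarrow> small_agents M n S = small_agents M n S'"
  unfolding small_agents_def by auto

lemma output_cong:
  assumes "\<forall>i\<in>{1..n}. S i = S' i \<and> v i = v' i" "sm_alg_output M n S' v' x"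
  shows "sm_alg_output M n S v x"
proof -
  have sm: "small_agents M n S = small_agents M n S'" using assms(1) small_cong by blast
  have Q1: "small_agents M n S \<subseteq> {1..n}" unfolding small_agents_def by auto
  obtain l1 l2 x2 where o: "distinct l1" "set l1 = small_agents M n S'" "sorted_wrt (\<lambda>i j. v' j \<le> v' i) l1"
        "fill_leftover M n (phase1 S' (\<lambda>_. {}) l1) x2"
        "distinct l2" "set l2 = {1..n} - small_agents M n S'" "sorted_wrt (\<lambda>i j. v' j \<le> v' i) l2"
        "x = phase2 n S' v' x2 l2"
    using assms(2) unfolding sm_alg_output_def by blast
  have s1: "set l1 \<subseteq> {1..n}" "set l2 \<subseteq> {1..n}" using o(2,6) sm Q1 by auto
  have vv: "\<forall>i\<in>{1..n}. v i = v' i" "\<forall>i\<in>{1..n}. S i = S' i" using assms(1) by auto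
  show ?thesis unfolding sm_alg_output_def
    apply (rule exI[of _ l1], rule exI[of _ l2], rule exI[of _ x2])
    using o sm s1 sorted_wrt_cong_v[OF s1(1) vv(1)] sorted_wrt_cong_v[OF s1(2) vv(1)]
      phase1_cong[OF s1(1) vv(2), of "\<lambda>_. {}"] phase2_cong[OF assms(1) s1(2), of x2]
    by simp
qed

lemma fill_exists: "\<exists>x'. fill_leftover M n x x'"
proof (cases "\<exists>j\<in>{1..n}. x j \<noteq> {}")
  case True
  then obtain j0 where j0: "j0 \<in> {1..n}" "x j0 \<noteq> {}" by blast
  define L where "L = M - (\<Union>j\<in>{1..n}. x j)"
  have "fill_leftover M n x (\<lambda>j. if j = 0 then {} else x j \<union> {a\<in>L. j0 = j})"
    unfolding fill_leftover_def Let_def L_def[symmetric] if_P[OF True]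
    using j0 by (intro exI[of _ "\<lambda>_. j0"]) auto
  then show ?thesis by blast
next
  case False
  define L where "L = M - (\<Union>j\<in>{1..n}. x j)"
  have "fill_leftover M n x (\<lambda>j. if j = 0 then L else x j)"
    unfolding fill_leftover_def Let_def L_def[symmetric] using False by auto
  then show ?thesis by blast
qed

lemma sorted_list_exists:
  fixes v :: "nat \<Rightarrow> real"
  assumes "finite A"
  shows "\<exists>l. distinct l \<and> set l = A \<and> sorted_wrt (\<lambda>i j. v j \<le> v i) l"
proof -
  define l where "l = sort_key (\<lambda>i. - v i) (sorted_list_of_set A)"
  have "distinct l" "set l = A" using assms by (auto simp: l_def)
  moreover have "sorted (map (\<lambda>i. - v i) l)" unfolding l_def by (rule sorted_sort_key)
  then have "sorted_wrt (\<lambda>i j. v j \<le> v i) l" by (simp add: sorted_map)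
  ultimately show ?thesis by blast
qed

lemma output_exists:
  fixes v :: "nat \<Rightarrow> real"
  shows "\<exists>x. sm_alg_output M n S v x"
proof -
  have f1: "finite (small_agents M n S)" unfolding small_agents_def by simp
  obtain l1 where l1: "distinct l1" "set l1 = small_agents M n S" "sorted_wrt (\<lambda>i j. v j \<le> v i) l1"
    using sorted_list_exists[OF f1] by blast
  obtain l2 where l2: "distinct l2" "set l2 = {1..n} - small_agents M n S" "sorted_wrt (\<lambda>i j. v j \<le> v i) l2"
    using sorted_list_exists[of "{1..n} - small_agents M n S"] by blast
  obtain x2 where "fill_leftover M n (phase1 S (\<lambda>_. {}) l1) x2" using fill_exists by blast
  then show ?thesis unfolding sm_alg_output_def using l1 l2 by blast
qed

lemma len_concat_const: "(\<forall>x\<in>set xs. length (f x) = c) \<Longrightarrow> length (concat (map f xs)) = length xs * c"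
  by (induction xs) auto

lemma part2:
  "\<exists>(c::nat) (d::nat). \<forall>(M :: 'a set) n. finite M \<longrightarrow>
            (\<exists>t :: ('a, nat \<Rightarrow> 'a set) qtree.
               \<forall>S v. (\<forall>i\<in>{1..n}. S i \<noteq> {} \<and> S i \<subseteq> M \<and> v i > 0) \<longrightarrow>
                 snd (run_qtree t (sm_val S v)) \<le> c * (n + card M + 1) ^ d \<and>
                 sm_alg_output M n S v (fst (run_qtree t (sm_val S v))))"
proof (rule exI[of _ "1::nat"], rule exI[of _ "2::nat"], intro allI impI)
  fix M :: "'a set" and n :: nat
  assume fM: "finite M"
  define XL where "XL = (SOME xs. set xs = M \<and> distinct xs)"
  have XL: "set XL = M \<and> distinct XL" unfolding XL_def
    using finite_distinct_list[OF fM] by (rule someI_ex)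
  define Lq where "Lq = concat (map (\<lambda>i. (i, M) # map (\<lambda>a. (i, M - {a})) XL) [1..<Suc n])"
  have lenL: "length Lq = n * (card M + 1)"
  proof -
    have "length XL = card M" using XL distinct_card by fastforce
    then show ?thesis unfolding Lq_def by (subst len_concat_const[where c = "card M + 1"]) auto
  qed
  define F where "F g = (SOME x. sm_alg_output M n (\<lambda>i. {a\<in>M. g (i, M - {a}) = 0}) (\<lambda>i. g (i, M)) x)"
    for g :: "nat \<times> 'a set \<Rightarrow> real"
  show "\<exists>t :: ('a, nat \<Rightarrow> 'a set) qtree.
               \<forall>S v. (\<forall>i\<in>{1..n}. S i \<noteq> {} \<and> S i \<subseteq> M \<and> v i > 0) \<longrightarrow>
                 snd (run_qtree t (sm_val S v)) \<le> 1 * (n + card M + 1) ^ 2 \<and>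
                 sm_alg_output M n S v (fst (run_qtree t (sm_val S v)))"
  proof (intro exI[of _ "qs Lq (\<lambda>_. 0) F"] allI impI conjI)
    fix S :: "nat \<Rightarrow> 'a set" and v :: "nat \<Rightarrow> real"
    assume G: "\<forall>i\<in>{1..n}. S i \<noteq> {} \<and> S i \<subseteq> M \<and> v i > 0"
    define g where "g = foldl (\<lambda>a p. a(p := sm_val S v (fst p) (snd p))) (\<lambda>_. 0) Lq"
    have run: "run_qtree (qs Lq (\<lambda>_. 0) F) (sm_val S v) = (F g, length Lq)"
      unfolding g_def by (rule run_qs)
    have "n * (card M + 1) \<le> (n + card M + 1) * (n + card M + 1)"
      by (intro mult_mono) auto
    then show "snd (run_qtree (qs Lq (\<lambda>_. 0) F) (sm_val S v)) \<le> 1 * (n + card M + 1) ^ 2"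
      using run lenL by (simp add: power2_eq_square)
    have gi: "g p = sm_val S v (fst p) (snd p)" if "p \<in> set Lq" for p
      unfolding g_def using that by (rule foldl_upd_in)
    have agree: "\<forall>i\<in>{1..n}. S i = {a\<in>M. g (i, M - {a}) = 0} \<and> v i = g (i, M)"
    proof
      fix i assume i: "i \<in> {1..n}"
      have inL1: "(i, M) \<in> set Lq" using i unfolding Lq_def by auto
      have inL2: "(i, M - {a}) \<in> set Lq" if "a \<in> M" for a
      proof -
        have "(i, M - {a}) \<in> set ((\<lambda>i. (i, M) # map (\<lambda>a. (i, M - {a})) XL) i)" using that XL by auto
        moreover have "i \<in> set [1..<Suc n]" using i by auto
        ultimately show ?thesis unfolding Lq_def set_concat set_map by blast
      qed
      have SiM: "S i \<subseteq> M" and vp: "v i > 0" using G i by auto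
      have "v i = g (i, M)" using gi[OF inL1] SiM by (simp add: sm_val_def)
      moreover have "S i = {a\<in>M. g (i, M - {a}) = 0}"
      proof -
        have "g (i, M - {a}) = 0 \<longleftrightarrow> a \<in> S i" if "a \<in> M" for a
          using gi[OF inL2[OF that]] vp SiM that by (auto simp: sm_val_def)
        then show ?thesis using SiM by auto
      qed
      ultimately show "S i = {a\<in>M. g (i, M - {a}) = 0} \<and> v i = g (i, M)" by simp
    qed
    have "sm_alg_output M n (\<lambda>i. {a\<in>M. g (i, M - {a}) = 0}) (\<lambda>i. g (i, M)) (F g)"
      unfolding F_def using output_exists by (rule someI_ex)
    then have "sm_alg_output M n S v (F g)" using output_cong[OF agree] by blast
    then show "sm_alg_output M n S v (fst (run_qtree (qs Lq (\<lambda>_. 0) F) (sm_val S v)))"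
      using run by simp
  qed
qed


theorem theorem4:
  shows "(\<exists>C::real. C > 0 \<and>
            (\<forall>(M :: 'a set) n S v x.
               finite M \<and> (\<forall>i\<in>{1..n}. S i \<noteq> {} \<and> S i \<subseteq> M \<and> v i > 0) \<and>
               sm_alg_output M n S v x \<longrightarrow>
                 is_allocation M n x \<and> is_MC_CWE n S v x \<and>
                 (\<forall>y. is_allocation M n y \<longrightarrow>
                      social_welfare n S v y \<le> C * sqrt (real (card M)) * social_welfare n S v x)))
       \<and> (\<exists>(c::nat) (d::nat). \<forall>(M :: 'a set) n. finite M \<longrightarrow>
            (\<exists>t :: ('a, nat \<Rightarrow> 'a set) qtree.
               \<forall>S v. (\<forall>i\<in>{1..n}. S i \<noteq> {} \<and> S i \<subseteq> M \<and> v i > 0) \<longrightarrow>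
                 snd (run_qtree t (sm_val S v)) \<le> c * (n + card M + 1) ^ d \<and>
                 sm_alg_output M n S v (fst (run_qtree t (sm_val S v)))))"
proof (rule conjI)
  show "\<exists>C::real. C > 0 \<and>
            (\<forall>(M :: 'a set) n S v x.
               finite M \<and> (\<forall>i\<in>{1..n}. S i \<noteq> {} \<and> S i \<subseteq> M \<and> v i > 0) \<and>
               sm_alg_output M n S v x \<longrightarrow>
                 is_allocation M n x \<and> is_MC_CWE n S v x \<and>
                 (\<forall>y. is_allocation M n y \<longrightarrow>
                      social_welfare n S v y \<le> C * sqrt (real (card M)) * social_welfare n S v x))"
    apply (rule exI[of _ "2::real"], rule conjI)
     apply simp
    using part1 by blast
  show "\<exists>(c::nat) (d::nat). \<forall>(M :: 'a set) n. finite M \<longrightarrow>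
            (\<exists>t :: ('a, nat \<Rightarrow> 'a set) qtree.
               \<forall>S v. (\<forall>i\<in>{1..n}. S i \<noteq> {} \<and> S i \<subseteq> M \<and> v i > 0) \<longrightarrow>
                 snd (run_qtree t (sm_val S v)) \<le> c * (n + card M + 1) ^ d \<and>
                 sm_alg_output M n S v (fst (run_qtree t (sm_val S v))))"
    by (rule part2)
qed

end
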